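(* The price of anarchy of CC-MAR is unbounded: there exists an instance having a Nash equilibrium with positive total cost while some strategy profile has total cost $0$ (so the ratio between the worst Nash equilibrium cost and the optimal cost is not bounded by any constant).
   Context: A mixed graph $G=(V,E,A)$ has undirected edges $E\subseteq\binom{V}{2}$ with positive integer weights $w_e$ and arcs $A\subseteq V\times V$. A path is a sequence of pairwise distinct vertices in which consecutive vertices are joined by an edge or by an arc in the forward direction. A CC-MAR instance is $(G,\mathcal{T})$ with $\mathcal{T}$ a multiset of $k$ pairs $(s_i,t_i)$, each connected by some path. A strategy profile $\mathcal{P}=\{P_1,\dots,P_k\}$ consists of $s_i$-$t_i$ paths. For $\{u,v\}\in E$, $x_{uv}$ is the number of paths traversing it from $u$ to $v$. Agent $i$'s cost is $\sum w_{uv}x_{vu}$ over edges $\{u,v\}$ traversed by $P_i$ from $u$ to $v$; total cost is $\mathrm{cost}(\mathcal{P})=\sum_{\{u,v\}\in E}w_{uv}x_{uv}x_{vu}$. A Nash equilibrium is a profile where no agent can strictly lower its own cost by unilaterally changing its path. The price of anarchy is the supremum over instances of the ratio of the maximum total cost of a Nash equilibrium to the minimum total cost of any profile. *)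

theory Defs
  imports Main
begin

text \<open>Mixed graph: vertex set V, undirected edges E (two-element sets),
  edge weights w, arcs A (ordered pairs).\<close>

definition steps :: "'a list \<Rightarrow> ('a \<times> 'a) set" where
  "steps p = set (zip p (tl p))"

definition is_path :: "'a set \<Rightarrow> 'a set set \<Rightarrow> ('a \<times> 'a) set \<Rightarrow> 'a list \<Rightarrow> 'a \<Rightarrow> 'a \<Rightarrow> bool" where
  "is_path V E A p s t \<longleftrightarrow> p \<noteq> [] \<and> distinct p \<and> set p \<subseteq> V \<and> hd p = s \<and> last p = t \<and>
     (\<forall>(u,v) \<in> steps p. {u,v} \<in> E \<or> (u,v) \<in> A)"

definition wf_instance :: "'a set \<Rightarrow> 'a set set \<Rightarrow> ('a set \<Rightarrow> nat) \<Rightarrow> ('a \<times> 'a) set \<Rightarrow> ('a \<times> 'a) list \<Rightarrow> bool" where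
  "wf_instance V E w A T \<longleftrightarrow> finite V \<and>
     E \<subseteq> {e. \<exists>u v. e = {u,v} \<and> u \<noteq> v \<and> u \<in> V \<and> v \<in> V} \<and>
     A \<subseteq> V \<times> V \<and> (\<forall>e\<in>E. w e > 0) \<and>
     (\<forall>(s,t) \<in> set T. \<exists>p. is_path V E A p s t)"

definition is_profile :: "'a set \<Rightarrow> 'a set set \<Rightarrow> ('a \<times> 'a) set \<Rightarrow> ('a \<times> 'a) list \<Rightarrow> 'a list list \<Rightarrow> bool" where
  "is_profile V E A T P \<longleftrightarrow> length P = length T \<and>
     (\<forall>i < length T. is_path V E A (P ! i) (fst (T ! i)) (snd (T ! i)))"

definition xflow :: "'a set set \<Rightarrow> 'a list list \<Rightarrow> 'a \<Rightarrow> 'a \<Rightarrow> nat" where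
  "xflow E P u v = (if {u,v} \<in> E then length (filter (\<lambda>p. (u,v) \<in> steps p) P) else 0)"

definition agent_cost :: "'a set set \<Rightarrow> ('a set \<Rightarrow> nat) \<Rightarrow> 'a list list \<Rightarrow> nat \<Rightarrow> nat" where
  "agent_cost E w P i = (\<Sum>(u,v) \<in> {(u,v). {u,v} \<in> E \<and> (u,v) \<in> steps (P ! i)}. w {u,v} * xflow E P v u)"

definition total_cost :: "'a::linorder set set \<Rightarrow> ('a set \<Rightarrow> nat) \<Rightarrow> 'a list list \<Rightarrow> nat" where
  "total_cost E w P = (\<Sum>(u,v) \<in> {(u,v). {u,v} \<in> E \<and> u < v}. w {u,v} * xflow E P u v * xflow E P v u)"

definition is_NE :: "'a set \<Rightarrow> 'a set set \<Rightarrow> ('a set \<Rightarrow> nat) \<Rightarrow> ('a \<times> 'a) set \<Rightarrow> ('a \<times> 'a) list \<Rightarrow> 'a list list \<Rightarrow> bool" where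
  "is_NE V E w A T P \<longleftrightarrow> is_profile V E A T P \<and>
     (\<forall>i < length T. \<forall>q. is_path V E A q (fst (T ! i)) (snd (T ! i)) \<longrightarrow>
        agent_cost E w P i \<le> agent_cost E w (P[i := q]) i)"

end

theory Submission
  imports Defs
begin

definition "V0 = {1,2,3,4,5::nat}"
definition "E0 = {{1,2},{3,4::nat}}"
definition "w0 = (\<lambda>_::nat set. 1::nat)"
definition "A0 = {(2,3),(4,1),(3,5),(4,5::nat)}"
definition "T0 = [(1,2),(2,1),(4,5::nat)]"
definition "P0 = [[1,2],[2,1],[4,3,5::nat]]"
definition "Q0 = [[1,2],[2,3,4,1],[4,5::nat]]"

lemma pred_step:
  assumes "x \<in> set p" "x \<noteq> hd p"
  shows "\<exists>y. (y,x) \<in> steps p"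
proof -
  obtain j where j: "j < length p" "p ! j = x" using assms(1) by (auto simp: in_set_conv_nth)
  have "j \<noteq> 0"
  proof
    assume "j = 0"
    then show False using j assms(2) by (simp add: hd_conv_nth)
  qed
  then have "zip p (tl p) ! (j-1) = (p ! (j-1), p ! j)" using j
    by (cases p) auto
  moreover have "j - 1 < length (zip p (tl p))" using j \<open>j \<noteq> 0\<close> by auto
  ultimately have "(p ! (j-1), x) \<in> set (zip p (tl p))" using j
    by (metis nth_mem)
  then show ?thesis unfolding steps_def by blast
qed

lemma step_ok:
  assumes "is_path V E A p s t" "(u,v) \<in> steps p"
  shows "{u,v} \<in> E \<or> (u,v) \<in> A"
  using assms unfolding is_path_def by auto

lemma cost_ge:
  assumes "{u,v} \<in> E" "(u,v) \<in> steps (P ! i)"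
  shows "w {u,v} * xflow E P v u \<le> agent_cost E w P i"
proof -
  have fin: "finite {(u,v). {u,v} \<in> E \<and> (u,v) \<in> steps (P ! i)}"
    by (rule finite_subset[of _ "steps (P ! i)"]) (auto simp: steps_def)
  show ?thesis unfolding agent_cost_def
    using member_le_sum[OF _ _ fin, of "(u,v)" "\<lambda>(u,v). w {u,v} * xflow E P v u"] assms
    by auto
qed

lemma xflow_ge:
  assumes "{u,v} \<in> E" "p \<in> set P" "(u,v) \<in> steps p"
  shows "1 \<le> xflow E P u v"
proof -
  have "filter (\<lambda>p. (u,v) \<in> steps p) P \<noteq> []" using assms by (auto simp: filter_empty_conv)
  then show ?thesis using assms(1) unfolding xflow_def by (cases "filter (\<lambda>p. (u,v) \<in> steps p) P") auto
qed

lemma E0_iff: "{a,b} \<in> E0 \<longleftrightarrow> (a=1 \<and> b=2) \<or> (a=2 \<and> b=1) \<or> (a=3 \<and> b=4) \<or> (a=4 \<and> b=3)"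
  unfolding E0_def by (auto simp: doubleton_eq_iff)

lemma wf0: "wf_instance V0 E0 w0 A0 T0"
proof -
  have "is_path V0 E0 A0 [1,2] 1 2" "is_path V0 E0 A0 [2,1] 2 1" "is_path V0 E0 A0 [4,5] 4 5"
    by (auto simp: is_path_def V0_def E0_def A0_def steps_def)
  then have "\<forall>(s,t) \<in> set T0. \<exists>p. is_path V0 E0 A0 p s t" by (auto simp: T0_def)
  moreover have "E0 \<subseteq> {e. \<exists>u v. e = {u,v} \<and> u \<noteq> v \<and> u \<in> V0 \<and> v \<in> V0}"
  proof -
    have "{1,2} \<in> {e. \<exists>u v. e = {u,v} \<and> u \<noteq> v \<and> u \<in> V0 \<and> v \<in> V0}"
      by (rule CollectI, rule exI[of _ 1], rule exI[of _ 2]) (simp add: V0_def)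
    moreover have "{3,4} \<in> {e. \<exists>u v. e = {u,v} \<and> u \<noteq> v \<and> u \<in> V0 \<and> v \<in> V0}"
      by (rule CollectI, rule exI[of _ 3], rule exI[of _ 4]) (simp add: V0_def)
    ultimately show ?thesis unfolding E0_def by blast
  qed
  moreover have "A0 \<subseteq> V0 \<times> V0" unfolding A0_def V0_def by auto
  ultimately show ?thesis unfolding wf_instance_def by (auto simp: V0_def w0_def)
qed

lemma Eset: "{(u,v). {u,v} \<in> E0 \<and> u < v} = {(1,2),(3,4)}"
  using E0_iff by auto

lemma xf: "xflow E0 P u v = (if {u,v} \<in> E0 then length (filter (\<lambda>p. (u,v) \<in> steps p) P) else 0)"
  by (simp add: xflow_def)

lemma tcP: "total_cost E0 w0 P0 = 1"
  unfolding total_cost_def Eset by (simp add: xf E0_iff P0_def steps_def w0_def)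

lemma tcQ: "total_cost E0 w0 Q0 = 0"
  unfolding total_cost_def Eset by (simp add: xf E0_iff Q0_def steps_def w0_def)

lemma profQ: "is_profile V0 E0 A0 T0 Q0"
  unfolding is_profile_def
  by (auto simp: less_Suc_eq T0_def Q0_def is_path_def V0_def E0_def A0_def steps_def)

lemma profP: "is_profile V0 E0 A0 T0 P0"
  unfolding is_profile_def
  by (auto simp: less_Suc_eq T0_def P0_def is_path_def V0_def E0_def A0_def steps_def)

lemma c0: "agent_cost E0 w0 P0 0 \<le> 1"
proof -
  have "{(u,v). {u,v} \<in> E0 \<and> (u,v) \<in> steps (P0 ! 0)} = {(1,2)}"
    using E0_iff by (auto simp: P0_def steps_def)
  then show ?thesis unfolding agent_cost_def by (simp add: xf E0_iff P0_def steps_def w0_def)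
qed

lemma c1: "agent_cost E0 w0 P0 1 \<le> 1"
proof -
  have "{(u,v). {u,v} \<in> E0 \<and> (u,v) \<in> steps (P0 ! 1)} = {(2,1)}"
    using E0_iff by (auto simp: P0_def steps_def)
  then show ?thesis unfolding agent_cost_def by (simp add: xf E0_iff P0_def steps_def w0_def)
qed

lemma c2: "agent_cost E0 w0 P0 2 = 0"
proof -
  have "{(u,v). {u,v} \<in> E0 \<and> (u,v) \<in> steps (P0 ! 2)} = {(4,3)}"
    using E0_iff by (auto simp: P0_def steps_def)
  then show ?thesis unfolding agent_cost_def by (simp add: xf E0_iff P0_def steps_def w0_def)
qed

lemma pathD: "is_path V E A q s t \<Longrightarrow> t \<in> set q \<and> hd q = s"
  unfolding is_path_def by auto

lemma dev0:
  assumes q: "is_path V0 E0 A0 q 1 2"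
  shows "1 \<le> agent_cost E0 w0 (P0[0 := q]) 0"
proof -
  from pathD[OF q] have "2 \<in> set q" "2 \<noteq> hd q" by auto
  then obtain y where y: "(y,2) \<in> steps q" using pred_step[of 2 q] by auto
  from step_ok[OF q y] have "y = 1" by (simp add: E0_iff A0_def)
  with y have st: "(1,2) \<in> steps (P0[0 := q] ! 0)" by (simp add: P0_def)
  have "1 \<le> xflow E0 (P0[0 := q]) 2 1"
    by (rule xflow_ge[of _ _ _ "[2,1]"]) (simp add: E0_iff, simp add: P0_def, simp add: steps_def)
  also have "\<dots> = w0 {1,2} * xflow E0 (P0[0 := q]) 2 1" by (simp add: w0_def)
  also have "\<dots> \<le> agent_cost E0 w0 (P0[0 := q]) 0"
    by (rule cost_ge[OF _ st]) (simp add: E0_iff)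
  finally show ?thesis .
qed

lemma dev1:
  assumes q: "is_path V0 E0 A0 q 2 1"
  shows "1 \<le> agent_cost E0 w0 (P0[1 := q]) 1"
proof -
  from pathD[OF q] have "1 \<in> set q" "1 \<noteq> hd q" by auto
  then obtain y where y: "(y,1) \<in> steps q" using pred_step[of 1 q] by auto
  from step_ok[OF q y] have "y = 2 \<or> y = 4" by (simp add: E0_iff A0_def)
  then show ?thesis
  proof
    assume "y = 2"
    with y have st: "(2,1) \<in> steps (P0[1 := q] ! 1)" by (simp add: P0_def)
    have "1 \<le> xflow E0 (P0[1 := q]) 1 2"
      by (rule xflow_ge[of _ _ _ "[1,2]"]) (simp add: E0_iff, simp add: P0_def, simp add: steps_def)
    also have "\<dots> = w0 {2,1} * xflow E0 (P0[1 := q]) 1 2" by (simp add: w0_def)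
    also have "\<dots> \<le> agent_cost E0 w0 (P0[1 := q]) 1"
      by (rule cost_ge[OF _ st]) (simp add: E0_iff)
    finally show ?thesis .
  next
    assume "y = 4"
    with y have "4 \<in> set q" unfolding steps_def by (auto dest: set_zip_leftD)
    moreover have "4 \<noteq> hd q" using pathD[OF q] by auto
    ultimately obtain z where z: "(z,4) \<in> steps q" using pred_step[of 4 q] by auto
    from step_ok[OF q z] have "z = 3" by (simp add: E0_iff A0_def)
    with z have st: "(3,4) \<in> steps (P0[1 := q] ! 1)" by (simp add: P0_def)
    have "1 \<le> xflow E0 (P0[1 := q]) 4 3"
      by (rule xflow_ge[of _ _ _ "[4,3,5]"]) (simp add: E0_iff, simp add: P0_def, simp add: steps_def)
    also have "\<dots> = w0 {3,4} * xflow E0 (P0[1 := q]) 4 3" by (simp add: w0_def)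
    also have "\<dots> \<le> agent_cost E0 w0 (P0[1 := q]) 1"
      by (rule cost_ge[OF _ st]) (simp add: E0_iff)
    finally show ?thesis .
  qed
qed

lemma NE0: "is_NE V0 E0 w0 A0 T0 P0"
  unfolding is_NE_def
proof (intro conjI profP allI impI)
  fix i q assume i: "i < length T0" and q: "is_path V0 E0 A0 q (fst (T0 ! i)) (snd (T0 ! i))"
  from i have "i = 0 \<or> i = 1 \<or> i = 2" by (auto simp: T0_def)
  then show "agent_cost E0 w0 P0 i \<le> agent_cost E0 w0 (P0[i := q]) i"
  proof (elim disjE)
    assume "i = 0" then show ?thesis using dev0[of q] q c0 by (simp add: T0_def)
  next
    assume "i = 1" then show ?thesis using dev1[of q] q c1 by (simp add: T0_def)
  next
    assume "i = 2" then show ?thesis using c2 by simp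
  qed
qed

theorem mainTheorem3:
  shows "\<exists>(V :: nat set) E w A T P Q.
           wf_instance V E w A T \<and>
           is_NE V E w A T P \<and> total_cost E w P > 0 \<and>
           is_profile V E A T Q \<and> total_cost E w Q = 0"
  using wf0 NE0 tcP profQ tcQ by (intro exI[of _ V0] exI[of _ E0] exI[of _ w0] exI[of _ A0] exI[of _ T0] exI[of _ P0] exI[of _ Q0]) simp

end
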